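(* Let $L_{\max}>0$ and let $V$ be a speed-density function on $[0,L_{\max}]$. Define the critical vehicle density $L^*=\arg\max_{0\le L\le L_{\max}}[V(L)L]$ and the optimum vehicle density for the eVCC system $L^\dagger=\arg\max_{0\le L\le L_{\max}}[V(L)^2L]$. Suppose (1) $V$ is monotonically non-increasing and $V(L)\ge 0$ for $0\le L\le L_{\max}$; and (2) either $V$ is concave, or $V(L)=G-\sum_{k=1}^K c_kL^{\alpha_k}$ with $\alpha_k\in(0,+\infty)\cup(-1,-\tfrac12)$, $c_k\ge 0$ for all $k$, and $G\ge 0$. Then $L^\dagger\le L^*$.
   Context: $V(L)$ denotes the average vehicle speed on the road as a function of vehicle density $L$, and $L_{\max}$ is the traffic-jam density. The traffic flow rate is $F=VL$, and $L^*$ maximizes it. In the short-deadline regime the deadline violation probability of the vehicular cloud computing system is (up to constants independent of $L$) $\exp(-c\,L\,V(L)^2)$ with $c>0$, so the density minimizing it is the maximizer $L^\dagger$ of $V(L)^2L$. The maximizers are denoted with argmax as single points. *)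

theory Defs
  imports "HOL-Analysis.Analysis"
begin

text \<open>Set of maximizers of f over S (the paper's argmax, a set; the paper treats it as a single point).\<close>
definition argmax_on :: "(real \<Rightarrow> real) \<Rightarrow> real set \<Rightarrow> real set" where
  "argmax_on f S = {x \<in> S. \<forall>y\<in>S. f y \<le> f x}"

end

theory Submission
  imports Defs
begin

theorem theorem3:
  fixes V :: "real \<Rightarrow> real" and Lmax Lstar Ldag :: real
  assumes Lmax_pos: "Lmax > 0"
    and Lstar: "argmax_on (\<lambda>L. V L * L) {0..Lmax} = {Lstar}"
    and Ldag: "argmax_on (\<lambda>L. (V L)\<^sup>2 * L) {0..Lmax} = {Ldag}"
    and mono: "\<forall>x\<in>{0..Lmax}. \<forall>y\<in>{0..Lmax}. x \<le> y \<longrightarrow> V y \<le> V x"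
    and nonneg: "\<forall>L\<in>{0..Lmax}. V L \<ge> 0"
    and shape: "concave_on {0..Lmax} V \<or>
      (\<exists>(K::nat) (G::real) (c::nat \<Rightarrow> real) (\<alpha>::nat \<Rightarrow> real).
          G \<ge> 0 \<and>
          (\<forall>k\<in>{1..K}. c k \<ge> 0 \<and> (\<alpha> k > 0 \<or> (-1 < \<alpha> k \<and> \<alpha> k < -1/2))) \<and>
          (\<forall>L\<in>{0..Lmax}. V L = G - (\<Sum>k=1..K. c k * L powr \<alpha> k)))"
  shows "Ldag \<le> Lstar"
proof (rule ccontr)
  assume "\<not> Ldag \<le> Lstar"
  hence lt: "Lstar < Ldag" by simp
  have S: "Lstar \<in> {0..Lmax}" "\<forall>y\<in>{0..Lmax}. V y * y \<le> V Lstar * Lstar"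
    using Lstar unfolding argmax_on_def by blast+
  have D: "Ldag \<in> {0..Lmax}" "\<forall>y\<in>{0..Lmax}. (V y)\<^sup>2 * y \<le> (V Ldag)\<^sup>2 * Ldag"
    using Ldag unfolding argmax_on_def by blast+
  have vle: "V Ldag \<le> V Lstar" using mono S(1) D(1) lt by auto
  have v0: "V Ldag \<ge> 0" using nonneg D(1) by auto
  have l0: "Ldag \<ge> 0" "Lstar \<ge> 0" using D(1) S(1) by auto
  have neq: "Ldag \<notin> argmax_on (\<lambda>L. V L * L) {0..Lmax}" using Lstar lt by auto
  hence strict: "V Ldag * Ldag < V Lstar * Lstar"
    using S D(1) unfolding argmax_on_def by (auto simp: not_le)
  show False
  proof (cases "V Lstar = 0")
    case True
    hence "V Ldag = 0" using vle v0 by auto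
    thus False using strict True by simp
  next
    case False
    hence vp: "V Lstar > 0" using nonneg S(1) by force
    have a: "(V Ldag)\<^sup>2 * Ldag \<le> V Lstar * (V Ldag * Ldag)"
      unfolding power2_eq_square using vle v0 l0
      by (simp add: mult.assoc mult_right_mono)
    have b: "V Lstar * (V Ldag * Ldag) < V Lstar * (V Lstar * Lstar)"
      using vp strict by simp
    have "(V Ldag)\<^sup>2 * Ldag < (V Lstar)\<^sup>2 * Lstar"
      using a b by (simp add: power2_eq_square mult.assoc)
    thus False using D(2) S(1) by force
  qed
qed

end
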